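(* Let $s\geq 2$ be an even integer, let $m\geq 3$ be an integer, let $t\geq 1$ be an integer, and let $n$ be an integer with $n\geq \left(\frac{sm}{2}-1\right)(2sm-1)+1$. Then $$R(tP_n,J_{s,m})=tn+\frac{sm}{2}-1.$$
   Context: All graphs are finite and simple. For graphs $G$ and $H$, the Ramsey number $R(G,H)$ is the least natural number $N$ such that for every graph $F$ on $N$ vertices, either $F$ contains $G$ as a subgraph or the complement $\overline{F}$ contains $H$ as a subgraph. $P_n$ denotes the path on $n$ vertices, and $tP_n$ denotes the disjoint union of $t$ copies of $P_n$. For integers $s,m\geq 2$, the generalized Jahangir graph $J_{s,m}$ is the graph on $sm+1$ vertices consisting of a cycle $C_{sm}=v_1v_2\cdots v_{sm}v_1$ together with one additional vertex adjacent to exactly the $m$ cycle vertices $v_1, v_{s+1}, v_{2s+1},\ldots,v_{(m-1)s+1}$ (i.e., $m$ vertices of the cycle at distance $s$ from each other along the cycle). *)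

theory Defs
  imports Main
begin

text \<open>A finite simple graph is given by a finite vertex set and a symmetric,
irreflexive adjacency relation (only its restriction to the vertex set matters).\<close>

definition simple_graph :: "'a set \<Rightarrow> ('a \<Rightarrow> 'a \<Rightarrow> bool) \<Rightarrow> bool" where
  "simple_graph V E \<longleftrightarrow> finite V \<and> (\<forall>u v. E u v \<longrightarrow> E v u) \<and> (\<forall>u. \<not> E u u)"

definition contains_subgraph ::
  "'a set \<Rightarrow> ('a \<Rightarrow> 'a \<Rightarrow> bool) \<Rightarrow> 'b set \<Rightarrow> ('b \<Rightarrow> 'b \<Rightarrow> bool) \<Rightarrow> bool" where
  "contains_subgraph V E W D \<longleftrightarrow>
     (\<exists>f. inj_on f W \<and> f ` W \<subseteq> V \<and> (\<forall>x\<in>W. \<forall>y\<in>W. D x y \<longrightarrow> E (f x) (f y)))"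

definition compl_graph :: "('a \<Rightarrow> 'a \<Rightarrow> bool) \<Rightarrow> 'a \<Rightarrow> 'a \<Rightarrow> bool" where
  "compl_graph E u v \<longleftrightarrow> u \<noteq> v \<and> \<not> E u v"

definition ramsey_arrows ::
  "nat \<Rightarrow> 'b set \<Rightarrow> ('b \<Rightarrow> 'b \<Rightarrow> bool) \<Rightarrow> 'c set \<Rightarrow> ('c \<Rightarrow> 'c \<Rightarrow> bool) \<Rightarrow> bool" where
  "ramsey_arrows N VG EG VH EH \<longleftrightarrow>
     (\<forall>E :: nat \<Rightarrow> nat \<Rightarrow> bool. simple_graph {0..<N} E \<longrightarrow>
        contains_subgraph {0..<N} E VG EG \<or> contains_subgraph {0..<N} (compl_graph E) VH EH)"

definition ramsey_number ::
  "'b set \<Rightarrow> ('b \<Rightarrow> 'b \<Rightarrow> bool) \<Rightarrow> 'c set \<Rightarrow> ('c \<Rightarrow> 'c \<Rightarrow> bool) \<Rightarrow> nat" where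
  "ramsey_number VG EG VH EH = (LEAST N. ramsey_arrows N VG EG VH EH)"

text \<open>t P_n: vertices (a,i) with a < t, i < n; the a-th copy is the path (a,0)(a,1)...(a,n-1).\<close>
definition tP_verts :: "nat \<Rightarrow> nat \<Rightarrow> (nat \<times> nat) set" where
  "tP_verts t n = {0..<t} \<times> {0..<n}"

definition tP_edge :: "nat \<times> nat \<Rightarrow> nat \<times> nat \<Rightarrow> bool" where
  "tP_edge x y \<longleftrightarrow> fst x = fst y \<and> (snd x + 1 = snd y \<or> snd y + 1 = snd x)"

text \<open>Generalized Jahangir graph J_{s,m}: cycle vertices 0..s*m-1 (vertex k is v_{k+1}),
  cycle edges k ~ (k+1) mod (s*m), plus the extra vertex s*m adjacent to the cycle vertices
  k with s dvd k, i.e. v_1, v_{s+1}, ..., v_{(m-1)s+1}.\<close>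
definition jahangir_verts :: "nat \<Rightarrow> nat \<Rightarrow> nat set" where
  "jahangir_verts s m = {0..s*m}"

definition jahangir_edge :: "nat \<Rightarrow> nat \<Rightarrow> nat \<Rightarrow> nat \<Rightarrow> bool" where
  "jahangir_edge s m u v \<longleftrightarrow>
     (u < s*m \<and> v < s*m \<and> (v = (u + 1) mod (s*m) \<or> u = (v + 1) mod (s*m))) \<or>
     (u = s*m \<and> v < s*m \<and> s dvd v) \<or>
     (v = s*m \<and> u < s*m \<and> s dvd u)"

end

theory Submission
  imports Defs
begin

definition ispath :: "(nat \<Rightarrow> nat \<Rightarrow> bool) \<Rightarrow> nat set \<Rightarrow> nat list \<Rightarrow> bool" where
  "ispath E V xs \<longleftrightarrow> distinct xs \<and> set xs \<subseteq> V \<and> successively E xs"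

definition noK :: "(nat \<Rightarrow> nat \<Rightarrow> bool) \<Rightarrow> nat set \<Rightarrow> nat \<Rightarrow> bool" where
  "noK E V k \<longleftrightarrow> \<not>(\<exists>A B. A \<subseteq> V \<and> B \<subseteq> V \<and> A \<inter> B = {} \<and> card A = k \<and> card B = Suc k
      \<and> (\<forall>a\<in>A. \<forall>b\<in>B. \<not> E a b))"

lemma noK_mono:
  assumes nk: "noK E V k" and RV: "R \<subseteq> V"
  shows "noK E R k"
  unfolding noK_def
proof
  assume "\<exists>A B. A \<subseteq> R \<and> B \<subseteq> R \<and> A \<inter> B = {} \<and> card A = k \<and> card B = Suc k
      \<and> (\<forall>a\<in>A. \<forall>b\<in>B. \<not> E a b)"
  then obtain A B where h: "A \<subseteq> R" "B \<subseteq> R" "A \<inter> B = {}" "card A = k" "card B = Suc k"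
      "\<forall>a\<in>A. \<forall>b\<in>B. \<not> E a b" by blast
  have "A \<subseteq> V" "B \<subseteq> V" using h RV by auto
  hence "\<exists>A B. A \<subseteq> V \<and> B \<subseteq> V \<and> A \<inter> B = {} \<and> card A = k \<and> card B = Suc k
      \<and> (\<forall>a\<in>A. \<forall>b\<in>B. \<not> E a b)" using h by blast
  thus False using nk unfolding noK_def by simp
qed

lemma noK_contra:
  assumes "noK E V k" "A \<subseteq> V" "B \<subseteq> V" "A \<inter> B = {}" "card A \<ge> k" "card B \<ge> Suc k"
    "\<forall>a\<in>A. \<forall>b\<in>B. \<not> E a b"
  shows False
proof -
  obtain A' where A': "A' \<subseteq> A" "card A' = k" using obtain_subset_with_card_n assms(5) by metis
  obtain B' where B': "B' \<subseteq> B" "card B' = Suc k" using obtain_subset_with_card_n assms(6) by metis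
  have "A' \<subseteq> V" "B' \<subseteq> V" "A' \<inter> B' = {}" "\<forall>a\<in>A'. \<forall>b\<in>B'. \<not> E a b"
    using A' B' assms by blast+
  hence "\<exists>A B. A \<subseteq> V \<and> B \<subseteq> V \<and> A \<inter> B = {} \<and> card A = k \<and> card B = Suc k
      \<and> (\<forall>a\<in>A. \<forall>b\<in>B. \<not> E a b)" using A' B' by blast
  then show False using assms(1) unfolding noK_def by simp
qed

lemma ispath_take: "ispath E V xs \<Longrightarrow> ispath E V (take n xs)"
  unfolding ispath_def using successively_append_iff[of E "take n xs" "drop n xs"]
  by (auto dest: in_set_takeD)

lemma ispath_mono: "ispath E R xs \<Longrightarrow> R \<subseteq> V \<Longrightarrow> ispath E V xs"
  unfolding ispath_def by blast

lemma ispath_len: "finite V \<Longrightarrow> ispath E V xs \<Longrightarrow> length xs \<le> card V"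
  unfolding ispath_def by (metis card_mono distinct_card)

lemma longest_path:
  assumes "finite V"
  shows "\<exists>xs. ispath E V xs \<and> (\<forall>ys. ispath E V ys \<longrightarrow> length ys \<le> length xs)"
proof -
  have "ispath E V []" by (simp add: ispath_def)
  moreover have "\<forall>ys. ispath E V ys \<longrightarrow> length ys < Suc (card V)"
    using ispath_len[OF assms] by (simp add: less_Suc_eq_le)
  ultimately show ?thesis using ex_has_greatest_nat[of "ispath E V" "[]" length "Suc (card V)"]
    by blast
qed

lemma path_cons: "ispath E V xs \<Longrightarrow> a \<notin> set xs \<Longrightarrow> a \<in> V \<Longrightarrow> xs \<noteq> [] \<Longrightarrow> E a (hd xs)
   \<Longrightarrow> ispath E V (a # xs)"
  by (auto simp: ispath_def successively_Cons)

lemma path_insert: "ispath E V (P1 @ P2) \<Longrightarrow> a \<notin> set (P1 @ P2) \<Longrightarrow> a \<in> V \<Longrightarrow> P1 \<noteq> []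
  \<Longrightarrow> P2 \<noteq> [] \<Longrightarrow> E (last P1) a \<Longrightarrow> E a (hd P2) \<Longrightarrow> ispath E V (P1 @ a # P2)"
  by (auto simp: ispath_def successively_append_iff successively_Cons)

lemma sym_eq: "\<forall>u v. E u v \<longrightarrow> E v u \<Longrightarrow> (\<lambda>x y. E y x) = E"
  by (auto intro!: ext)

lemma succ_rev: "\<forall>u v. E u v \<longrightarrow> E v u \<Longrightarrow> successively E xs \<Longrightarrow> successively (\<lambda>x y. E y x) xs"
  by (erule successively_mono) auto

lemma path_rot: "\<forall>u v. E u v \<longrightarrow> E v u \<Longrightarrow> ispath E V (P1 @ P2) \<Longrightarrow> w \<notin> set (P1 @ P2)
  \<Longrightarrow> w \<in> V \<Longrightarrow> P1 \<noteq> [] \<Longrightarrow> P2 \<noteq> [] \<Longrightarrow> E w (last P1) \<Longrightarrow> E (hd P1) (hd P2)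
  \<Longrightarrow> ispath E V (w # rev P1 @ P2)"
  by (auto simp: ispath_def successively_append_iff successively_Cons hd_rev last_rev intro: succ_rev)

lemma path_cross: "\<forall>u v. E u v \<longrightarrow> E v u \<Longrightarrow> ispath E V (P1 @ P2 @ P3)
  \<Longrightarrow> a \<notin> set (P1 @ P2 @ P3) \<Longrightarrow> a' \<notin> set (P1 @ P2 @ P3) \<Longrightarrow> a \<noteq> a' \<Longrightarrow> a \<in> V \<Longrightarrow> a' \<in> V
  \<Longrightarrow> P1 \<noteq> [] \<Longrightarrow> P2 \<noteq> [] \<Longrightarrow> P3 \<noteq> []
  \<Longrightarrow> E (last P1) a \<Longrightarrow> E a (last P2) \<Longrightarrow> E (hd P2) a' \<Longrightarrow> E a' (hd P3)
  \<Longrightarrow> ispath E V (P1 @ a # rev P2 @ a' # P3)"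
  by (auto simp: ispath_def successively_append_iff successively_Cons hd_rev last_rev intro: succ_rev)

lemma last_take_Suc: "i < length xs \<Longrightarrow> last (take (Suc i) xs) = xs ! i"
  by (simp add: take_Suc_conv_app_nth)

lemma hd_take_Suc: "xs \<noteq> [] \<Longrightarrow> hd (take (Suc i) xs) = xs ! 0"
  by (simp add: hd_conv_nth)

lemma hd_drop_Suc: "Suc i < length xs \<Longrightarrow> hd (drop (Suc i) xs) = xs ! Suc i"
  by (simp add: hd_drop_conv_nth)

lemma low_deg:
  assumes sym: "\<forall>u v. E u v \<longrightarrow> E v u" and irr: "\<forall>u. \<not> E u u" and fin: "finite R"
    and nk: "noK E R k" and bnd: "\<forall>ys. ispath E R ys \<longrightarrow> length ys \<le> L"
    and cR: "card R \<ge> L + k" and ne: "R \<noteq> {}"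
  shows "\<exists>v\<in>R. card {u\<in>R. E v u} \<le> k"
proof -
  obtain xs where xs: "ispath E R xs" and mx: "\<forall>ys. ispath E R ys \<longrightarrow> length ys \<le> length xs"
    using longest_path fin by blast
  obtain v0 where "v0 \<in> R" using ne by blast
  have "ispath E R [v0]" using \<open>v0 \<in> R\<close> by (simp add: ispath_def)
  hence "length xs \<ge> 1" using mx by force
  hence xsne: "xs \<noteq> []" by auto
  define p where "p = xs ! 0"
  have pR: "p \<in> R" using xs xsne unfolding ispath_def p_def by auto
  define W where "W = R - set xs"
  have lenL: "length xs \<le> L" using bnd xs by blast
  have cardset: "card (set xs) = length xs" using xs distinct_card unfolding ispath_def by blast
  have sxR: "set xs \<subseteq> R" using xs unfolding ispath_def by blast
  have cW: "card W \<ge> k" unfolding W_def using card_Diff_subset[OF finite_subset[OF sxR fin] sxR]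
      cardset lenL cR by linarith
  have nbr_in: "\<forall>u\<in>R. E p u \<longrightarrow> u \<in> set xs"
  proof (intro ballI impI, rule ccontr)
    fix u assume u: "u \<in> R" "E p u" "u \<notin> set xs"
    have "hd xs = p" using xsne by (simp add: p_def hd_conv_nth)
    hence "ispath E R (u # xs)" using path_cons[OF xs u(3) u(1) xsne] sym u(2) by auto
    then show False using mx by fastforce
  qed
  define I where "I = {i. Suc i < length xs \<and> E p (xs ! Suc i)}"
  define Es where "Es = (\<lambda>i. xs ! i) ` I"
  have finI: "finite I" unfolding I_def by (rule finite_subset[of _ "{..<length xs}"]) auto
  have "{u\<in>R. E p u} \<subseteq> (\<lambda>i. xs ! Suc i) ` I"
  proof
    fix u assume "u \<in> {u\<in>R. E p u}"
    hence uu: "u \<in> R" "E p u" by auto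
    then obtain j where j: "j < length xs" "u = xs ! j" using nbr_in by (auto simp: in_set_conv_nth)
    have "u \<noteq> p" using irr uu(2) by auto
    have "j \<noteq> 0"
    proof
      assume "j = 0" thus False using \<open>u \<noteq> p\<close> j p_def by simp
    qed
    then obtain i where "j = Suc i" by (cases j) auto
    thus "u \<in> (\<lambda>i. xs ! Suc i) ` I" using j uu I_def by auto
  qed
  hence c1: "card {u\<in>R. E p u} \<le> card I"
    by (meson card_image_le card_mono finI finite_imageI le_trans)
  have "inj_on (\<lambda>i. xs ! i) I" using xs unfolding ispath_def I_def inj_on_def
    by (auto simp: nth_eq_iff_index_eq)
  hence c2: "card Es = card I" unfolding Es_def by (rule card_image)
  show ?thesis
  proof (rule ccontr)
    assume "\<not> ?thesis"
    hence "card {u\<in>R. E p u} > k" using pR by force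
    hence cEs: "card Es \<ge> Suc k" using c1 c2 by linarith
    have nonadj: "\<forall>a\<in>W. \<forall>b\<in>Es. \<not> E a b"
    proof (intro ballI notI)
      fix a b assume a: "a \<in> W" and b: "b \<in> Es" and ab: "E a b"
      then obtain i where i: "i \<in> I" "b = xs ! i" by (auto simp: Es_def)
      have il: "Suc i < length xs" "E p (xs ! Suc i)" using i I_def by auto
      have "ispath E R (a # rev (take (Suc i) xs) @ drop (Suc i) xs)"
        apply (rule path_rot[OF sym])
        using xs a il ab i W_def
        by (auto simp: last_take_Suc hd_take_Suc hd_drop_Suc p_def hd_conv_nth[OF xsne])
      hence "length (a # rev (take (Suc i) xs) @ drop (Suc i) xs) \<le> length xs" using mx by blast
      thus False using il by simp
    qed
    have "Es \<subseteq> set xs" unfolding Es_def I_def by auto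
    hence h1: "Es \<subseteq> R" and h2: "W \<inter> Es = {}" using sxR W_def by auto
    have h3: "W \<subseteq> R" using W_def by auto
    show False by (rule noK_contra[OF nk h3 h1 h2 cW cEs nonadj])
  qed
qed

lemma long_case:
  assumes sym: "\<forall>u v. E u v \<longrightarrow> E v u" and fin: "finite V" and nk: "noK E V k"
    and xs: "ispath E V xs" and mx: "\<forall>ys. ispath E V ys \<longrightarrow> length ys \<le> length xs"
    and cV: "card V \<ge> length xs + k" and lg: "length xs \<ge> k*k + k + 3"
  shows False
proof -
  define l where "l = length xs"
  define W where "W = V - set xs"
  have cardset: "card (set xs) = length xs" using xs distinct_card unfolding ispath_def by blast
  have sxV: "set xs \<subseteq> V" and dxs: "distinct xs" using xs unfolding ispath_def by blast+
  have cW: "card W \<ge> k" unfolding W_def using card_Diff_subset[OF finite_subset[OF sxV fin] sxV]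
      cardset cV by linarith
  obtain A where A: "A \<subseteq> W" "card A = k" "finite A" using obtain_subset_with_card_n[OF cW] by metis
  have AV: "\<forall>a\<in>A. a \<in> V \<and> a \<notin> set xs" using A W_def by auto
  define S where "S = {i. i < l \<and> (\<exists>a\<in>A. E a (xs ! i))}"
  define T where "T = {i. i < l \<and> i \<notin> S}"
  define C where "C = {i. Suc i < l \<and> i \<in> S \<and> Suc i \<in> S}"
  define g where "g i = ((SOME a. a\<in>A \<and> E a (xs ! i)), (SOME a. a\<in>A \<and> E a (xs ! Suc i)))" for i
  have gC: "fst (g i) \<in> A \<and> E (fst (g i)) (xs ! i) \<and> snd (g i) \<in> A \<and> E (snd (g i)) (xs ! Suc i)"
    if "i \<in> C" for i
  proof -
    have e1: "\<exists>a. a\<in>A \<and> E a (xs ! i)" and e2: "\<exists>a. a\<in>A \<and> E a (xs ! Suc i)"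
      using that unfolding C_def S_def by auto
    have "(SOME a. a\<in>A \<and> E a (xs ! i)) \<in> A \<and> E (SOME a. a\<in>A \<and> E a (xs ! i)) (xs ! i)"
      by (rule someI_ex[OF e1])
    moreover have "(SOME a. a\<in>A \<and> E a (xs ! Suc i)) \<in> A \<and> E (SOME a. a\<in>A \<and> E a (xs ! Suc i)) (xs ! Suc i)"
      by (rule someI_ex[OF e2])
    ultimately show ?thesis unfolding g_def by simp
  qed
  have diag: "fst (g i) \<noteq> snd (g i)" if "i \<in> C" for i
  proof
    assume eq: "fst (g i) = snd (g i)"
    define a where "a = fst (g i)"
    have il: "Suc i < l" using that C_def by auto
    have "ispath E V (take (Suc i) xs @ a # drop (Suc i) xs)"
      apply (rule path_insert)
      using xs il gC[OF that] eq AV sym unfolding a_def l_def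
      by (auto simp: last_take_Suc hd_drop_Suc)
    hence "length (take (Suc i) xs @ a # drop (Suc i) xs) \<le> length xs" using mx by blast
    thus False using il l_def by simp
  qed
  have cross: "g i \<noteq> g j" if ij: "i \<in> C" "j \<in> C" "i < j" for i j
  proof
    assume eq: "g i = g j"
    define a where "a = fst (g i)"
    define a' where "a' = snd (g i)"
    have aa: "a \<noteq> a'" using diag[OF ij(1)] a_def a'_def by simp
    have jl: "Suc j < l" using ij C_def by auto
    define P1 where "P1 = take (Suc i) xs"
    define P2 where "P2 = take (j - i) (drop (Suc i) xs)"
    define P3 where "P3 = drop (Suc j) xs"
    have dec: "xs = P1 @ P2 @ P3"
    proof -
      have "drop (j - i) (drop (Suc i) xs) = P3" unfolding P3_def using ij(3) by simp
      hence "drop (Suc i) xs = P2 @ P3" unfolding P2_def by (metis append_take_drop_id)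
      thus ?thesis unfolding P1_def by (metis append_take_drop_id)
    qed
    have lP2: "length P2 = j - i" unfolding P2_def using jl l_def ij(3) by simp
    have P2ne: "P2 \<noteq> []" using lP2 ij(3) by auto
    have hP2: "hd P2 = xs ! Suc i" unfolding P2_def using ij(3) jl l_def
      by (simp add: hd_conv_nth)
    have lastP2: "last P2 = xs ! j" unfolding P2_def using ij(3) jl l_def
      by (simp add: last_conv_nth)
    have "ispath E V (P1 @ a # rev P2 @ a' # P3)"
      apply (rule path_cross[OF sym])
      using xs dec aa AV gC[OF ij(1)] gC[OF ij(2)] eq jl ij(3) P2ne hP2 lastP2 sym
      unfolding a_def a'_def P1_def P3_def l_def
      by (auto simp: last_take_Suc hd_drop_Suc)
    hence "length (P1 @ a # rev P2 @ a' # P3) \<le> length xs" using mx by blast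
    moreover have "length xs = length P1 + length P2 + length P3" using dec
      by (metis length_append add.assoc)
    ultimately show False by simp
  qed
  have injg: "inj_on g C"
    unfolding inj_on_def by (metis cross linorder_neqE_nat)
  define Dg where "Dg = (\<lambda>a. (a, a)) ` A"
  have gCsub: "g ` C \<subseteq> A \<times> A - Dg"
  proof
    fix x assume "x \<in> g ` C"
    then obtain i where i: "i \<in> C" "x = g i" by blast
    have "g i \<in> A \<times> A" using gC[OF i(1)] by (cases "g i") auto
    moreover have "g i \<notin> Dg" using diag[OF i(1)] unfolding Dg_def by auto
    ultimately show "x \<in> A \<times> A - Dg" using i by simp
  qed
  have cDg: "card Dg = k" unfolding Dg_def using A by (simp add: card_image inj_on_def)
  have cAA: "card (A \<times> A - Dg) = k * k - k"
    using card_Diff_subset[of Dg "A \<times> A"] A cDg unfolding Dg_def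
    by (auto simp: card_cartesian_product)
  have cC: "card C \<le> k * k - k"
  proof -
    have "card C = card (g ` C)" using injg by (simp add: card_image)
    also have "\<dots> \<le> card (A \<times> A - Dg)" by (rule card_mono) (use A gCsub in auto)
    finally show ?thesis using cAA by simp
  qed
  have kk: "k \<le> k * k" by (cases k) auto
  define D where "D = {i. Suc i < l} - C"
  have finC: "finite C" unfolding C_def by (rule finite_subset[of _ "{..<l}"]) auto
  have Csub: "C \<subseteq> {i. Suc i < l}" unfolding C_def by auto
  have cI: "card {i. Suc i < l} = l - 1"
  proof -
    have "{i. Suc i < l} = {..<l - 1}" by auto
    thus ?thesis by simp
  qed
  have finI: "finite {i. Suc i < l}" by (rule finite_subset[of _ "{..<l}"]) auto
  have cD: "card D + card C = l - 1"
  proof -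
    have "card D = card {i. Suc i < l} - card C" unfolding D_def by (rule card_Diff_subset[OF finC Csub])
    moreover have "card C \<le> card {i. Suc i < l}" by (rule card_mono[OF finI Csub])
    ultimately show ?thesis using cI by simp
  qed
  have finT: "finite T" unfolding T_def by (rule finite_subset[of _ "{..<l}"]) auto
  have DT: "D \<subseteq> T \<union> {i. Suc i \<in> T}" unfolding D_def C_def T_def by auto
  have cT2: "card {i. Suc i \<in> T} \<le> card T"
  proof -
    have "Suc ` {i. Suc i \<in> T} \<subseteq> T" by auto
    hence "card (Suc ` {i. Suc i \<in> T}) \<le> card T" using finT card_mono by blast
    thus ?thesis by (simp add: card_image)
  qed
  have finT2: "finite {i. Suc i \<in> T}"
  proof -
    have "{i. Suc i \<in> T} \<subseteq> {..<l}" unfolding T_def by auto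
    thus ?thesis using finite_subset by blast
  qed
  have "card D \<le> card (T \<union> {i. Suc i \<in> T})" by (rule card_mono[OF _ DT]) (use finT finT2 in simp)
  also have "\<dots> \<le> card T + card {i. Suc i \<in> T}" by (rule card_Un_le)
  finally have "card D \<le> card T + card {i. Suc i \<in> T}" .
  hence "card D \<le> 2 * card T" using cT2 by linarith
  hence cTk: "card T \<ge> Suc k" using cD cC kk lg l_def by linarith
  define B where "B = (\<lambda>i. xs ! i) ` T"
  have "inj_on (\<lambda>i. xs ! i) T" using dxs unfolding T_def l_def inj_on_def
    by (auto simp: nth_eq_iff_index_eq)
  hence cB: "card B = card T" unfolding B_def by (simp add: card_image)
  have BV: "B \<subseteq> V" "B \<subseteq> set xs" unfolding B_def T_def l_def using sxV by auto
  have AB: "A \<inter> B = {}" using AV BV by auto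
  have nonadj: "\<forall>a\<in>A. \<forall>b\<in>B. \<not> E a b" unfolding B_def T_def S_def by auto
  have AV': "A \<subseteq> V" using AV by auto
  show False by (rule noK_contra[OF nk AV' BV(1) AB _ _ nonadj]) (use A cB cTk in auto)
qed

lemma greedy:
  assumes sym: "\<forall>u v. E u v \<longrightarrow> E v u" and irr: "\<forall>u. \<not> E u u" and fin: "finite V"
    and nk: "noK E V k" and bnd: "\<forall>ys. ispath E V ys \<longrightarrow> length ys \<le> L" and k1: "k \<ge> 1"
    and c1: "card V + 1 \<ge> k*k + L + k" and c2: "card V \<ge> k*k + 2*k + 1"
  shows False
proof -
  have step: "\<exists>A R. A \<subseteq> V \<and> R \<subseteq> V \<and> A \<inter> R = {} \<and> card A = j \<and> card V \<le> card R + j*(k+1)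
      \<and> (\<forall>a\<in>A. \<forall>b\<in>R. \<not> E a b)" if "j \<le> k" for j
    using that
  proof (induction j)
    case 0
    show ?case by (rule exI[of _ "{}"], rule exI[of _ V]) simp
  next
    case (Suc j)
    then obtain A R where AR: "A \<subseteq> V" "R \<subseteq> V" "A \<inter> R = {}" "card A = j"
      "card V \<le> card R + j*(k+1)" "\<forall>a\<in>A. \<forall>b\<in>R. \<not> E a b" by auto
    have "Suc j * (k+1) \<le> k * (k+1)" by (rule mult_le_mono1) (use Suc in auto)
    hence "j*(k+1) + (k+1) \<le> k*k + k" by (simp add: algebra_simps)
    hence cR: "card R \<ge> L + k" using AR(5) c1 by linarith
    have finR: "finite R" using AR(2) fin finite_subset by blast
    have Rne: "R \<noteq> {}" using cR k1 by auto
    have bndR: "\<forall>ys. ispath E R ys \<longrightarrow> length ys \<le> L" using bnd AR(2) ispath_mono by blast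
    obtain v where v: "v \<in> R" "card {u\<in>R. E v u} \<le> k"
      using low_deg[OF sym irr finR noK_mono[OF nk AR(2)] bndR cR Rne] by blast
    define R' where "R' = R - insert v {u\<in>R. E v u}"
    have "R \<subseteq> R' \<union> insert v {u\<in>R. E v u}" unfolding R'_def by auto
    hence "card R \<le> card (R' \<union> insert v {u\<in>R. E v u})" using finR
      by (intro card_mono) (auto simp: R'_def)
    also have "\<dots> \<le> card R' + card (insert v {u\<in>R. E v u})" by (rule card_Un_le)
    also have "\<dots> \<le> card R' + Suc k"
    proof -
      have "finite {u\<in>R. E v u}" using finR by simp
      hence "card (insert v {u\<in>R. E v u}) \<le> Suc (card {u\<in>R. E v u})" by (simp add: card_insert_if)
      thus ?thesis using v(2) by simp
    qed
    finally have cR': "card R + 0 \<le> card R' + Suc k" by simp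
    have vA: "v \<notin> A" using v AR(3) by auto
    have finA: "finite A" using AR(1) fin finite_subset by blast
    show ?case
    proof (intro exI conjI)
      show "insert v A \<subseteq> V" using AR v by auto
      show "R' \<subseteq> V" using AR R'_def by auto
      show "insert v A \<inter> R' = {}" using AR R'_def by auto
      show "card (insert v A) = Suc j" using vA finA AR by simp
      show "card V \<le> card R' + Suc j * (k + 1)" using cR' AR(5) by simp
      show "\<forall>a\<in>insert v A. \<forall>b\<in>R'. \<not> E a b" using AR R'_def by auto
    qed
  qed
  obtain A R where AR: "A \<subseteq> V" "R \<subseteq> V" "A \<inter> R = {}" "card A = k"
      "card V \<le> card R + k*(k+1)" "\<forall>a\<in>A. \<forall>b\<in>R. \<not> E a b" using step[of k] by auto
  have "card R \<ge> Suc k" using AR(5) c2 by (simp add: algebra_simps)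
  then show False using noK_contra[OF nk AR(1) AR(2) AR(3) _ _ AR(6)] AR(4) by simp
qed

lemma has_path:
  assumes sym: "\<forall>u v. E u v \<longrightarrow> E v u" and irr: "\<forall>u. \<not> E u u" and fin: "finite V"
    and nk: "noK E V k" and k3: "k \<ge> 3" and cV: "card V \<ge> n + k - 1"
    and nb: "n \<ge> (k-1)*(4*k-1)+1"
  shows "\<exists>xs. ispath E V xs \<and> length xs = n"
proof -
  obtain xs where xs: "ispath E V xs" and mx: "\<forall>ys. ispath E V ys \<longrightarrow> length ys \<le> length xs"
    using longest_path fin by blast
  obtain j where kj: "k = j + 3" using k3 by (metis add.commute le_Suc_ex)
  have big: "card V + 1 \<ge> 2*(k*k) + 2*k + 2" "card V \<ge> k*k + 2*k + 1"
    using cV nb unfolding kj by (simp_all add: algebra_simps)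
  show ?thesis
  proof (cases "length xs \<ge> n")
    case True
    thus ?thesis using ispath_take[OF xs, of n] by (intro exI[of _ "take n xs"]) simp
  next
    case False
    hence cl: "card V \<ge> length xs + k" using cV by linarith
    show ?thesis
    proof (cases "length xs \<ge> k*k + k + 3")
      case True
      thus ?thesis using long_case[OF sym fin nk xs mx cl] by blast
    next
      case False
      have "card V + 1 \<ge> k*k + length xs + k" using False big by linarith
      thus ?thesis using greedy[OF sym irr fin nk _ _ _ big(2), of "length xs"] mx k3 by auto
    qed
  qed
qed

lemma multi_path:
  assumes sym: "\<forall>u v. E u v \<longrightarrow> E v u" and irr: "\<forall>u. \<not> E u u" and k3: "k \<ge> 3"
    and nb: "n \<ge> (k-1)*(4*k-1)+1"
  shows "finite V \<Longrightarrow> noK E V k \<Longrightarrow> card V \<ge> t*n + k - 1 \<Longrightarrow>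
    \<exists>g. inj_on (\<lambda>(a,i). g a i) ({0..<t} \<times> {0..<n}) \<and> (\<forall>a<t. \<forall>i<n. g a i \<in> V)
       \<and> (\<forall>a<t. \<forall>i. Suc i < n \<longrightarrow> E (g a i) (g a (Suc i)))"
proof (induction t arbitrary: V)
  case 0
  show ?case by (intro exI[of _ "\<lambda>a i. 0"]) simp
next
  case (Suc t)
  have "card V \<ge> n + k - 1" using Suc.prems(3) by simp
  then obtain xs where xs: "ispath E V xs" "length xs = n"
    using has_path[OF sym irr Suc.prems(1) Suc.prems(2) k3 _ nb] by blast
  have sxV: "set xs \<subseteq> V" and dxs: "distinct xs" using xs unfolding ispath_def by blast+
  define V' where "V' = V - set xs"
  have "card V' = card V - n" unfolding V'_def
    using card_Diff_subset[OF finite_subset[OF sxV Suc.prems(1)] sxV] distinct_card[OF dxs] xs(2)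
    by simp
  hence cV': "card V' \<ge> t*n + k - 1" using Suc.prems(3) by simp
  obtain g where g: "inj_on (\<lambda>(a,i). g a i) ({0..<t} \<times> {0..<n})" "\<forall>a<t. \<forall>i<n. g a i \<in> V'"
    "\<forall>a<t. \<forall>i. Suc i < n \<longrightarrow> E (g a i) (g a (Suc i))"
    using Suc.IH[OF _ noK_mono[OF Suc.prems(2)] cV'] Suc.prems(1) V'_def by auto
  define g' where "g' a i = (if a = t then xs ! i else g a i)" for a i
  have key: "a = b \<and> i = j"
    if h: "a < Suc t" "i < n" "b < Suc t" "j < n" "g' a i = g' b j" for a i b j
    proof (cases "a = t")
      case True
      show ?thesis
      proof (cases "b = t")
        case True
        thus ?thesis using \<open>a = t\<close> h dxs xs(2) by (simp add: g'_def nth_eq_iff_index_eq)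
      next
        case False
        hence "g b j \<in> V'" using g(2) h by auto
        moreover have "xs ! i \<in> set xs" using h xs(2) by simp
        ultimately show ?thesis using h \<open>a = t\<close> False by (simp add: g'_def V'_def)
      qed
    next
      case False
      show ?thesis
      proof (cases "b = t")
        case True
        have "g a i \<in> V'" using g(2) h False by auto
        moreover have "xs ! j \<in> set xs" using h xs(2) by simp
        ultimately show ?thesis using h \<open>b = t\<close> False by (simp add: g'_def V'_def)
      next
        case False
        hence "g a i = g b j" using h \<open>a \<noteq> t\<close> by (simp add: g'_def)
        thus ?thesis using inj_onD[OF g(1), of "(a,i)" "(b,j)"] h \<open>a \<noteq> t\<close> False by auto
      qed
    qed
  have inj: "inj_on (\<lambda>(a,i). g' a i) ({0..<Suc t} \<times> {0..<n})"
    unfolding inj_on_def using key by auto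
  show ?case
  proof (intro exI conjI)
    show "inj_on (\<lambda>(a,i). g' a i) ({0..<Suc t} \<times> {0..<n})" by (rule inj)
    show "\<forall>a<Suc t. \<forall>i<n. g' a i \<in> V"
      using g(2) sxV xs(2) V'_def by (auto simp: g'_def less_Suc_eq)
    show "\<forall>a<Suc t. \<forall>i. Suc i < n \<longrightarrow> E (g' a i) (g' a (Suc i))"
      using g(3) xs successively_nth[of E xs] unfolding ispath_def
      by (auto simp: g'_def less_Suc_eq)
  qed
qed

lemma mod_parity:
  fixes a b K :: nat
  assumes "a < 2*K" "b = (a + 1) mod (2*K)"
  shows "even a \<longleftrightarrow> odd b"
proof (cases "a + 1 < 2*K")
  case True
  thus ?thesis using assms by simp
next
  case False
  hence "a + 1 = 2*K" using assms by simp
  hence "odd a" by presburger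
  moreover have "b = 0" using \<open>a + 1 = 2*K\<close> assms by simp
  ultimately show ?thesis by simp
qed

lemma J_from_AB:
  fixes E :: "nat \<Rightarrow> nat \<Rightarrow> bool" and A B U :: "nat set"
  assumes ev: "even s" and sm: "s*m = 2*K" and K1: "K \<ge> 1" and sym: "\<forall>u v. E u v \<longrightarrow> E v u"
    and AB: "A \<subseteq> U" "B \<subseteq> U" "A \<inter> B = {}" "card A = K" "card B = Suc K"
      "\<forall>a\<in>A. \<forall>b\<in>B. \<not> E a b"
  shows "contains_subgraph U (compl_graph E) (jahangir_verts s m) (jahangir_edge s m)"
proof -
  have finA: "finite A" using AB(4) K1 card_ge_0_finite by force
  have finB: "finite B" using AB(5) card_ge_0_finite by force
  define as where "as = sorted_list_of_set A"
  define bs where "bs = sorted_list_of_set B"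
  have as: "distinct as" "set as = A" "length as = K" using finA AB(4) by (auto simp: as_def)
  have bs: "distinct bs" "set bs = B" "length bs = Suc K" using finB AB(5) by (auto simp: bs_def)
  define inA where "inA j \<longleftrightarrow> j < 2*K \<and> even j" for j
  define f where "f j = (if j = 2*K then bs ! K else if even j then as ! (j div 2) else bs ! (j div 2))"
    for j
  have fA: "f j \<in> A" if "inA j" for j
  proof -
    have "j div 2 < K" using that unfolding inA_def by auto
    thus ?thesis using that as unfolding inA_def f_def by auto
  qed
  have fB: "f j \<in> B" if "j \<le> 2*K" "\<not> inA j" for j
  proof (cases "j = 2*K")
    case True thus ?thesis using bs nth_mem[of K bs] by (simp add: f_def)
  next
    case False
    hence "j < 2*K" "odd j" using that unfolding inA_def by auto
    hence "j div 2 < Suc K" by auto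
    thus ?thesis using bs \<open>odd j\<close> False nth_mem[of "j div 2" bs] by (simp add: f_def)
  qed
  have edge: "inA u \<noteq> inA v" if "jahangir_edge s m u v" "u \<le> 2*K" "v \<le> 2*K" for u v
  proof -
    have e: "(u < 2*K \<and> v < 2*K \<and> (v = (u + 1) mod (2*K) \<or> u = (v + 1) mod (2*K))) \<or>
     (u = 2*K \<and> v < 2*K \<and> s dvd v) \<or> (v = 2*K \<and> u < 2*K \<and> s dvd u)"
      using that(1) unfolding jahangir_edge_def sm by simp
    have dv: "s dvd x \<Longrightarrow> even x" for x using ev by (metis dvd_trans)
    show ?thesis using e mod_parity[of u K v] mod_parity[of v K u] dv unfolding inA_def by auto
  qed
  show ?thesis unfolding contains_subgraph_def
  proof (intro exI conjI)
    show "inj_on f (jahangir_verts s m)"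
    proof (rule inj_onI)
      fix u v assume u: "u \<in> jahangir_verts s m" and v: "v \<in> jahangir_verts s m" and fe: "f u = f v"
      have ul: "u \<le> 2*K" and vl: "v \<le> 2*K" using u v sm by (auto simp: jahangir_verts_def)
      show "u = v"
      proof (cases "inA u")
        case True
        show ?thesis
        proof (cases "inA v")
          case True
          hence "as ! (u div 2) = as ! (v div 2)" using \<open>inA u\<close> fe by (simp add: f_def inA_def)
          moreover have "u div 2 < K" "v div 2 < K" using \<open>inA u\<close> True by (auto simp: inA_def)
          ultimately have "u div 2 = v div 2" using as by (simp add: nth_eq_iff_index_eq)
          thus ?thesis using \<open>inA u\<close> True unfolding inA_def by (metis dvd_mult_div_cancel)
        next
          case False
          thus ?thesis using fA[OF \<open>inA u\<close>] fB[OF vl False] fe AB(3) by auto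
        qed
      next
        case False
        show ?thesis
        proof (cases "inA v")
          case True
          thus ?thesis using fA[OF True] fB[OF ul False] fe AB(3) by auto
        next
          case False
          define iu where "iu = (if u = 2*K then K else u div 2)"
          define iv where "iv = (if v = 2*K then K else v div 2)"
          have ou: "u = 2*K \<or> odd u" and ov: "v = 2*K \<or> odd v"
            using \<open>\<not> inA u\<close> False ul vl unfolding inA_def by auto
          have "f u = bs ! iu" "f v = bs ! iv" unfolding iu_def iv_def f_def using ou ov by auto
          moreover have "iu < Suc K" "iv < Suc K" unfolding iu_def iv_def using ul vl by auto
          ultimately have "iu = iv" using fe bs by (simp add: nth_eq_iff_index_eq)
          thus ?thesis using ou ov ul vl unfolding iu_def iv_def
            by (auto split: if_splits) presburger+
        qed
      qed
    qed
    show "f ` jahangir_verts s m \<subseteq> U"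
    proof
      fix x assume "x \<in> f ` jahangir_verts s m"
      then obtain j where j: "j \<le> 2*K" "x = f j" using sm by (auto simp: jahangir_verts_def)
      show "x \<in> U" using fA fB j AB(1,2) by (cases "inA j") auto
    qed
    show "\<forall>x\<in>jahangir_verts s m. \<forall>y\<in>jahangir_verts s m. jahangir_edge s m x y \<longrightarrow>
        compl_graph E (f x) (f y)"
    proof (intro ballI impI)
      fix x y assume x: "x \<in> jahangir_verts s m" and y: "y \<in> jahangir_verts s m"
        and e: "jahangir_edge s m x y"
      have xl: "x \<le> 2*K" and yl: "y \<le> 2*K" using x y sm by (auto simp: jahangir_verts_def)
      have ne: "inA x \<noteq> inA y" by (rule edge[OF e xl yl])
      show "compl_graph E (f x) (f y)"
      proof (cases "inA x")
        case True
        hence "f x \<in> A" "f y \<in> B" using fA fB ne yl by auto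
        thus ?thesis using AB(3,6) unfolding compl_graph_def by auto
      next
        case False
        hence "f y \<in> A" "f x \<in> B" using fA fB ne xl by auto
        thus ?thesis using AB(3,6) sym unfolding compl_graph_def by (metis disjoint_iff)
      qed
    qed
  qed
qed

lemma lower:
  assumes sm: "s*m = 2*K" and K1: "K \<ge> 1" and tn: "t*n \<ge> 1" and nK: "n \<ge> K"
    and N: "N' + 1 < t*n + K"
  shows "\<not> ramsey_arrows N' (tP_verts t n) tP_edge (jahangir_verts s m) (jahangir_edge s m)"
proof -
  define c where "c = t*n - 1"
  define E0 where "E0 u v \<longleftrightarrow> u \<noteq> v \<and> ((u < c) = (v < c))" for u v :: nat
  have sg: "simple_graph {0..<N'} E0" unfolding simple_graph_def E0_def by auto
  have cN: "N' - c < K"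
  proof -
    obtain q where q: "q = t*n" by blast
    have "N' + 1 < q + K" "1 \<le> q" "1 \<le> K" using N tn q K1 by auto
    thus ?thesis unfolding c_def q[symmetric] by arith
  qed
  have card2: "card {c..<N'} < K" using cN by simp
  have noP: "\<not> contains_subgraph {0..<N'} E0 (tP_verts t n) tP_edge"
  proof
    assume "contains_subgraph {0..<N'} E0 (tP_verts t n) tP_edge"
    then obtain f where f: "inj_on f (tP_verts t n)" "f ` tP_verts t n \<subseteq> {0..<N'}"
      "\<forall>x\<in>tP_verts t n. \<forall>y\<in>tP_verts t n. tP_edge x y \<longrightarrow> E0 (f x) (f y)"
      unfolding contains_subgraph_def by blast
    have same: "(f (a,i) < c) = (f (a,0) < c)" if "a < t" "i < n" for a i
      using that
    proof (induction i)
      case 0 thus ?case by simp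
    next
      case (Suc i)
      have "E0 (f (a,i)) (f (a, Suc i))"
        using f(3) Suc.prems by (auto simp: tP_verts_def tP_edge_def)
      thus ?case using Suc by (simp add: E0_def)
    qed
    show False
    proof (cases "\<exists>a<t. \<not> f (a,0) < c")
      case True
      then obtain a where a: "a < t" "\<not> f (a,0) < c" by blast
      have "(\<lambda>i. f (a,i)) ` {0..<n} \<subseteq> {c..<N'}"
      proof
        fix x assume "x \<in> (\<lambda>i. f (a,i)) ` {0..<n}"
        then obtain i where i: "i < n" "x = f (a,i)" by auto
        have "(a,i) \<in> tP_verts t n" using a(1) i by (simp add: tP_verts_def)
        hence "f (a,i) < N'" using f(2) by auto
        moreover have "\<not> f (a,i) < c" using same[OF a(1) i(1)] a(2) by simp
        ultimately show "x \<in> {c..<N'}" using i by simp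
      qed
      hence c1: "card ((\<lambda>i. f (a,i)) ` {0..<n}) \<le> card {c..<N'}" by (rule card_mono[rotated]) simp
      have inj: "inj_on (\<lambda>i. f (a,i)) {0..<n}"
      proof (rule inj_onI)
        fix i j assume ij: "i \<in> {0..<n}" "j \<in> {0..<n}" "f (a,i) = f (a,j)"
        have "(a,i) = (a,j)" by (rule inj_onD[OF f(1) ij(3)]) (use ij a(1) in \<open>simp_all add: tP_verts_def\<close>)
        thus "i = j" by simp
      qed
      have "card ((\<lambda>i. f (a,i)) ` {0..<n}) = n" using card_image[OF inj] by simp
      thus False using c1 card2 nK by simp
    next
      case False
      hence "f ` tP_verts t n \<subseteq> {0..<c}" using same f(2) by (force simp: tP_verts_def)
      hence "card (f ` tP_verts t n) \<le> card {0..<c}" by (rule card_mono[rotated]) simp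
      hence "card (tP_verts t n) \<le> card {0..<c}" using card_image[OF f(1)] by simp
      moreover have "card (tP_verts t n) = t*n" by (simp add: tP_verts_def card_cartesian_product)
      moreover have "card {0..<c} = c" by simp
      ultimately show False using tn unfolding c_def by linarith
    qed
  qed
  have noJ: "\<not> contains_subgraph {0..<N'} (compl_graph E0) (jahangir_verts s m) (jahangir_edge s m)"
  proof
    assume "contains_subgraph {0..<N'} (compl_graph E0) (jahangir_verts s m) (jahangir_edge s m)"
    then obtain f where f: "inj_on f {0..2*K}" "f ` {0..2*K} \<subseteq> {0..<N'}"
      "\<forall>x\<in>{0..2*K}. \<forall>y\<in>{0..2*K}. jahangir_edge s m x y \<longrightarrow> compl_graph E0 (f x) (f y)"
      unfolding contains_subgraph_def jahangir_verts_def sm by blast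
    have ce: "(f x < c) \<noteq> (f y < c)" if "x \<le> 2*K" "y \<le> 2*K" "jahangir_edge s m x y" for x y
    proof -
      have "compl_graph E0 (f x) (f y)" using f(3) that by simp
      thus ?thesis unfolding compl_graph_def E0_def by auto
    qed
    have alt: "(f j < c) = (if even j then f 0 < c else \<not> f 0 < c)" if "j < 2*K" for j
      using that
    proof (induction j)
      case 0 thus ?case by simp
    next
      case (Suc j)
      have "jahangir_edge s m j (Suc j)" unfolding jahangir_edge_def sm using Suc.prems by simp
      hence "(f j < c) \<noteq> (f (Suc j) < c)" using ce Suc.prems by simp
      thus ?case using Suc by auto
    qed
    have "jahangir_edge s m (2*K) 0" unfolding jahangir_edge_def sm using K1 by simp
    hence cen: "(f (2*K) < c) \<noteq> (f 0 < c)" using ce by simp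
    define Y where "Y = {j\<in>{0..2*K}. \<not> f j < c}"
    have "f ` Y \<subseteq> {c..<N'}"
    proof
      fix x assume "x \<in> f ` Y"
      then obtain j where j: "j \<le> 2*K" "\<not> f j < c" "x = f j" unfolding Y_def by auto
      have "f j \<in> f ` {0..2*K}" using j by simp
      hence "f j < N'" using f(2) by auto
      thus "x \<in> {c..<N'}" using j by simp
    qed
    moreover have "inj_on f Y" using f(1) unfolding Y_def by (rule inj_on_subset) auto
    ultimately have cY: "card Y < K"
    proof -
      assume a1: "f ` Y \<subseteq> {c..<N'}" and a2: "inj_on f Y"
      have "card (f ` Y) \<le> card {c..<N'}" by (rule card_mono[OF _ a1]) simp
      thus ?thesis using card_image[OF a2] card2 by simp
    qed
    have finY: "finite Y" by (rule finite_subset[of _ "{0..2*K}"]) (auto simp: Y_def)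
    show False
    proof (cases "f 0 < c")
      case False
      have "(\<lambda>i. 2*i) ` {0..<K} \<subseteq> Y"
      proof
        fix x assume "x \<in> (\<lambda>i. 2*i) ` {0..<K}"
        then obtain i where i: "i < K" "x = 2*i" by auto
        have "\<not> f (2*i) < c" using alt[of "2*i"] i False by simp
        thus "x \<in> Y" using i unfolding Y_def by simp
      qed
      hence "card ((\<lambda>i. 2*i) ` {0..<K}) \<le> card Y" using finY card_mono by blast
      moreover have "card ((\<lambda>i. 2*i) ` {0..<K}) = K" by (simp add: card_image inj_on_def)
      ultimately show False using cY by simp
    next
      case True
      have "insert (2*K) ((\<lambda>i. 2*i+1) ` {0..<K}) \<subseteq> Y"
      proof
        fix x assume "x \<in> insert (2*K) ((\<lambda>i. 2*i+1) ` {0..<K})"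
        then consider "x = 2*K" | i where "i < K" "x = 2*i+1" by auto
        thus "x \<in> Y"
        proof cases
          case 1 thus ?thesis using cen True unfolding Y_def by simp
        next
          case 2
          have "\<not> f (2*i+1) < c" using alt[of "2*i+1"] 2 True by simp
          thus ?thesis using 2 unfolding Y_def by simp
        qed
      qed
      hence "card (insert (2*K) ((\<lambda>i. 2*i+1) ` {0..<K})) \<le> card Y" using finY card_mono by blast
      moreover have "card (insert (2*K) ((\<lambda>i. 2*i+1) ` {0..<K})) = Suc K"
      proof -
        have "2*K \<notin> (\<lambda>i. 2*i+1) ` {0..<K}"
        proof
          assume "2*K \<in> (\<lambda>i. 2*i+1) ` {0..<K}"
          then obtain i where "2*K = 2*i+1" by auto
          thus False by presburger
        qed
        thus ?thesis by (simp add: card_image inj_on_def)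
      qed
      ultimately show False using cY by simp
    qed
  qed
  show ?thesis unfolding ramsey_arrows_def using sg noP noJ by blast
qed

theorem theorem3:
  fixes s m t n :: nat
  assumes "even s" and "s \<ge> 2" and "m \<ge> 3" and "t \<ge> 1"
    and "n \<ge> (s*m div 2 - 1) * (2*s*m - 1) + 1"
  shows "ramsey_number (tP_verts t n) tP_edge (jahangir_verts s m) (jahangir_edge s m)
         = t*n + s*m div 2 - 1"
proof -
  define k where "k = s*m div 2"
  have sm: "s*m = 2*k" using assms(1) unfolding k_def by auto
  have "s*m \<ge> 2*3" using assms(2,3) mult_le_mono by blast
  hence k3: "k \<ge> 3" using sm by simp
  have nb: "n \<ge> (k-1)*(4*k-1)+1" using assms(5) sm unfolding k_def[symmetric]
    by (simp add: mult.assoc)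
  have nk: "n \<ge> k"
  proof -
    have "(k-1)*(4*k-1) \<ge> (k-1)*1" by (rule mult_le_mono2) (use k3 in simp)
    hence "(k-1)*(4*k-1) \<ge> k - 1" by simp
    thus ?thesis using nb k3 by linarith
  qed
  have tn: "t*n \<ge> 1" using assms(4) nk k3 by (simp add: Suc_le_eq)
  define N0 where "N0 = t*n + k - 1"
  have arrows: "ramsey_arrows N0 (tP_verts t n) tP_edge (jahangir_verts s m) (jahangir_edge s m)"
    unfolding ramsey_arrows_def
  proof (intro allI impI)
    fix E :: "nat \<Rightarrow> nat \<Rightarrow> bool"
    assume sg: "simple_graph {0..<N0} E"
    have sym: "\<forall>u v. E u v \<longrightarrow> E v u" and irr: "\<forall>u. \<not> E u u" using sg unfolding simple_graph_def by auto
    show "contains_subgraph {0..<N0} E (tP_verts t n) tP_edge \<or>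
          contains_subgraph {0..<N0} (compl_graph E) (jahangir_verts s m) (jahangir_edge s m)"
    proof (cases "contains_subgraph {0..<N0} (compl_graph E) (jahangir_verts s m) (jahangir_edge s m)")
      case True thus ?thesis by blast
    next
      case False
      have noK: "noK E {0..<N0} k"
        unfolding noK_def using J_from_AB[OF assms(1) sm _ sym] False k3 by (metis le_trans one_le_numeral)
      obtain g where g: "inj_on (\<lambda>(a,i). g a i) ({0..<t} \<times> {0..<n})" "\<forall>a<t. \<forall>i<n. g a i \<in> {0..<N0}"
        "\<forall>a<t. \<forall>i. Suc i < n \<longrightarrow> E (g a i) (g a (Suc i))"
        using multi_path[OF sym irr k3 nb, of "{0..<N0}" t] noK unfolding N0_def by auto
      have "contains_subgraph {0..<N0} E (tP_verts t n) tP_edge"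
        unfolding contains_subgraph_def
      proof (intro exI conjI)
        show "inj_on (\<lambda>(a,i). g a i) (tP_verts t n)" using g(1) by (simp add: tP_verts_def)
        show "(\<lambda>(a,i). g a i) ` tP_verts t n \<subseteq> {0..<N0}" using g(2) by (auto simp: tP_verts_def)
        show "\<forall>x\<in>tP_verts t n. \<forall>y\<in>tP_verts t n. tP_edge x y \<longrightarrow> E ((\<lambda>(a,i). g a i) x) ((\<lambda>(a,i). g a i) y)"
          using g(3) sym by (auto simp: tP_verts_def tP_edge_def)
      qed
      thus ?thesis by blast
    qed
  qed
  have low: "\<not> ramsey_arrows N' (tP_verts t n) tP_edge (jahangir_verts s m) (jahangir_edge s m)"
    if "N' < N0" for N'
    by (rule lower[OF sm _ tn nk]) (use that k3 in \<open>simp_all add: N0_def\<close>)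
  have "ramsey_number (tP_verts t n) tP_edge (jahangir_verts s m) (jahangir_edge s m) = N0"
    unfolding ramsey_number_def
    by (rule Least_equality, rule arrows) (use low in \<open>force simp: not_less[symmetric]\<close>)
  thus ?thesis unfolding N0_def k_def .
qed


end
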